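(* Let $k\ge1$ and let $(T,o)$ be a valid finite rooted tree. If $K\subset V(T)$ satisfies $m(K,T)>0$ and $v_0\in V(T)\setminus K$, then $m(K\cup\{v_0\},T)<m(K,T)$.
   Context: Trees. For a finite rooted tree $(T,o)$, the height of a vertex is its distance from $o$ and the height of $T$ is the maximal height of a vertex. Vertices of even (odd) height are called even (odd); $V(T)$ and $U(T)$ denote the sets of even and odd vertices. $(T,o)$ is valid if its height is even and every odd vertex has degree exactly $k+1$ in $T$. For $K\subset V(T)$, $m(K,T)$ is the number of matchings of $T$ in which every vertex of $K\cup U(T)$ is saturated. *)

theory Defs
  imports Main
begin

definition graph :: "'a set \<Rightarrow> 'a set set \<Rightarrow> bool" where
  "graph VS E \<longleftrightarrow> finite VS \<and> (\<forall>e\<in>E. e \<subseteq> VS \<and> card e = 2)"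

definition walk :: "'a set \<Rightarrow> 'a set set \<Rightarrow> 'a list \<Rightarrow> bool" where
  "walk VS E xs \<longleftrightarrow> xs \<noteq> [] \<and> set xs \<subseteq> VS \<and>
     (\<forall>i. Suc i < length xs \<longrightarrow> {xs ! i, xs ! Suc i} \<in> E)"

definition connected_graph :: "'a set \<Rightarrow> 'a set set \<Rightarrow> bool" where
  "connected_graph VS E \<longleftrightarrow>
     (\<forall>u\<in>VS. \<forall>v\<in>VS. \<exists>xs. walk VS E xs \<and> hd xs = u \<and> last xs = v)"

definition is_cycle :: "'a set \<Rightarrow> 'a set set \<Rightarrow> 'a list \<Rightarrow> bool" where
  "is_cycle VS E xs \<longleftrightarrow> walk VS E xs \<and> distinct xs \<and> length xs \<ge> 3 \<and>
     {last xs, hd xs} \<in> E"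

definition is_tree :: "'a set \<Rightarrow> 'a set set \<Rightarrow> bool" where
  "is_tree VS E \<longleftrightarrow> graph VS E \<and> VS \<noteq> {} \<and> connected_graph VS E \<and>
     \<not> (\<exists>xs. is_cycle VS E xs)"

definition tdist :: "'a set \<Rightarrow> 'a set set \<Rightarrow> 'a \<Rightarrow> 'a \<Rightarrow> nat" where
  "tdist VS E u v = (LEAST n. \<exists>xs. walk VS E xs \<and> hd xs = u \<and> last xs = v \<and> length xs = Suc n)"

definition vheight :: "'a set \<Rightarrow> 'a set set \<Rightarrow> 'a \<Rightarrow> 'a \<Rightarrow> nat" where
  "vheight VS E r v = tdist VS E r v"

definition theight :: "'a set \<Rightarrow> 'a set set \<Rightarrow> 'a \<Rightarrow> nat" where
  "theight VS E r = Max (vheight VS E r ` VS)"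

definition even_vertices :: "'a set \<Rightarrow> 'a set set \<Rightarrow> 'a \<Rightarrow> 'a set" where
  "even_vertices VS E r = {v\<in>VS. even (vheight VS E r v)}"

definition odd_vertices :: "'a set \<Rightarrow> 'a set set \<Rightarrow> 'a \<Rightarrow> 'a set" where
  "odd_vertices VS E r = {v\<in>VS. odd (vheight VS E r v)}"

definition degree :: "'a set set \<Rightarrow> 'a \<Rightarrow> nat" where
  "degree E v = card {e\<in>E. v \<in> e}"

definition rooted_tree :: "'a set \<Rightarrow> 'a set set \<Rightarrow> 'a \<Rightarrow> bool" where
  "rooted_tree VS E r \<longleftrightarrow> is_tree VS E \<and> r \<in> VS"

definition valid :: "nat \<Rightarrow> 'a set \<Rightarrow> 'a set set \<Rightarrow> 'a \<Rightarrow> bool" where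
  "valid k VS E r \<longleftrightarrow> rooted_tree VS E r \<and> even (theight VS E r) \<and>
     (\<forall>v\<in>odd_vertices VS E r. degree E v = k + 1)"

definition matching :: "'a set set \<Rightarrow> 'a set set \<Rightarrow> bool" where
  "matching E M \<longleftrightarrow> M \<subseteq> E \<and> (\<forall>e\<in>M. \<forall>f\<in>M. e \<noteq> f \<longrightarrow> e \<inter> f = {})"

text \<open>m(K,T): number of matchings saturating every vertex of K \<union> U(T).\<close>

definition mcount :: "'a set \<Rightarrow> 'a set set \<Rightarrow> 'a \<Rightarrow> 'a set \<Rightarrow> nat" where
  "mcount VS E r K = card {M. matching E M \<and>
     (\<forall>v \<in> K \<union> odd_vertices VS E r. v \<in> \<Union>M)}"

end

theory Submission
  imports Defs
begin


definition nb :: "'a list \<Rightarrow> bool" where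
  "nb xs \<longleftrightarrow> (\<forall>i. i + 2 < length xs \<longrightarrow> xs ! i \<noteq> xs ! (i + 2))"

lemma walk_app:
  assumes "walk VS E xs" "walk VS E ys" "{last xs, hd ys} \<in> E"
  shows "walk VS E (xs @ ys)"
  unfolding walk_def
proof (intro conjI allI impI)
  show "xs @ ys \<noteq> []" using assms(1) by (simp add: walk_def)
  show "set (xs @ ys) \<subseteq> VS" using assms(1,2) by (simp add: walk_def)
  fix i assume i: "Suc i < length (xs @ ys)"
  have xne: "xs \<noteq> []" and yne: "ys \<noteq> []" using assms by (auto simp: walk_def)
  consider "Suc i < length xs" | "Suc i = length xs" | "i \<ge> length xs" by linarith
  then show "{(xs @ ys) ! i, (xs @ ys) ! Suc i} \<in> E"
  proof cases
    case 1 thus ?thesis using assms(1) by (simp add: walk_def nth_append)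
  next
    case 2
    then have "i = length xs - 1" by simp
    then have "(xs @ ys) ! i = last xs" using xne by (simp add: nth_append last_conv_nth)
    moreover have "(xs @ ys) ! Suc i = hd ys" using 2 yne by (simp add: nth_append hd_conv_nth)
    ultimately show ?thesis using assms(3) by simp
  next
    case 3
    then have "(xs @ ys) ! i = ys ! (i - length xs)" "(xs @ ys) ! Suc i = ys ! Suc (i - length xs)"
      by (auto simp: nth_append Suc_diff_le)
    moreover have "Suc (i - length xs) < length ys" using i 3 by simp
    ultimately show ?thesis using assms(2) by (simp add: walk_def)
  qed
qed

lemma walk_butlast:
  assumes "walk VS E (xs @ ys)" "xs \<noteq> []" shows "walk VS E xs"
  unfolding walk_def
proof (intro conjI allI impI)
  show "xs \<noteq> []" "set xs \<subseteq> VS" using assms by (auto simp: walk_def)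
  fix i assume i: "Suc i < length xs"
  then have "{(xs @ ys) ! i, (xs @ ys) ! Suc i} \<in> E" using assms(1) unfolding walk_def by simp
  then show "{xs ! i, xs ! Suc i} \<in> E" using i by (simp add: nth_append)
qed

lemma walk_drop:
  assumes "walk VS E xs" "j < length xs" shows "walk VS E (drop j xs)"
  unfolding walk_def
proof (intro conjI allI impI)
  show "drop j xs \<noteq> []" using assms by simp
  show "set (drop j xs) \<subseteq> VS" using assms(1) set_drop_subset unfolding walk_def by fast
  fix i assume i: "Suc i < length (drop j xs)"
  then have "Suc (j + i) < length xs" by simp
  then have "{xs ! (j + i), xs ! Suc (j + i)} \<in> E" using assms(1) unfolding walk_def by blast
  then show "{drop j xs ! i, drop j xs ! Suc i} \<in> E" using i assms(2) by simp
qed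

lemma walk_take:
  assumes "walk VS E xs" "0 < j" shows "walk VS E (take j xs)"
  unfolding walk_def
proof (intro conjI allI impI)
  show "take j xs \<noteq> []" using assms by (simp add: walk_def)
  show "set (take j xs) \<subseteq> VS" using assms(1) set_take_subset unfolding walk_def by fast
  fix i assume i: "Suc i < length (take j xs)"
  then have "Suc i < length xs" by simp
  then have "{xs ! i, xs ! Suc i} \<in> E" using assms(1) unfolding walk_def by blast
  then show "{take j xs ! i, take j xs ! Suc i} \<in> E" using i by simp
qed

lemma walk_rev:
  assumes "walk VS E xs" shows "walk VS E (rev xs)"
  unfolding walk_def
proof (intro conjI allI impI)
  show "rev xs \<noteq> []" "set (rev xs) \<subseteq> VS" using assms by (auto simp: walk_def)
  fix i assume i: "Suc i < length (rev xs)"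
  let ?n = "length xs"
  have a: "rev xs ! i = xs ! Suc (?n - Suc (Suc i))" using i by (simp add: rev_nth Suc_diff_Suc)
  have b: "rev xs ! Suc i = xs ! (?n - Suc (Suc i))" using i by (simp add: rev_nth)
  have "{xs ! (?n - Suc (Suc i)), xs ! Suc (?n - Suc (Suc i))} \<in> E"
    using assms i unfolding walk_def by auto
  thus "{rev xs ! i, rev xs ! Suc i} \<in> E" using a b by (simp add: insert_commute)
qed

lemma walk_join:
  assumes "walk VS E xs" "walk VS E ys" "last xs = hd ys"
  shows "walk VS E (xs @ tl ys) \<and> hd (xs @ tl ys) = hd xs \<and> last (xs @ tl ys) = last ys
     \<and> length (xs @ tl ys) = length xs + length ys - 1"
proof -
  have yne: "ys \<noteq> []" using assms(2) by (simp add: walk_def)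
  have xne: "xs \<noteq> []" using assms(1) by (simp add: walk_def)
  show ?thesis
  proof (cases "tl ys = []")
    case True
    then have ys: "ys = [hd ys]" using yne by (cases ys) auto
    have "length ys = 1" by (subst ys) simp
    moreover have "last ys = hd ys" by (subst ys) simp
    ultimately show ?thesis using assms(1,3) True xne by simp
  next
    case False
    have l: "1 < length ys" using False yne by (cases ys) auto
    have wt: "walk VS E (tl ys)" using walk_drop[OF assms(2), of 1] l by (simp add: drop_Suc)
    have "{ys ! 0, ys ! Suc 0} \<in> E" using assms(2) l unfolding walk_def by simp
    moreover have "ys ! 0 = hd ys" using yne by (simp add: hd_conv_nth)
    moreover have "ys ! Suc 0 = hd (tl ys)" using False yne by (cases ys) (auto simp: hd_conv_nth)
    ultimately have "{last xs, hd (tl ys)} \<in> E" using assms(3) by simp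
    then have "walk VS E (xs @ tl ys)" using walk_app[OF assms(1) wt] by simp
    moreover have "last (tl ys) = last ys" using False yne by (simp add: last_tl)
    ultimately show ?thesis using False xne yne l by simp
  qed
qed

lemma nb_distinct:
  assumes acyc: "\<And>ys. \<not> is_cycle VS E ys" and card2: "\<And>e. e \<in> E \<Longrightarrow> card e = 2"
  shows "walk VS E xs \<Longrightarrow> nb xs \<Longrightarrow> distinct xs"
proof (induction xs rule: rev_induct)
  case Nil thus ?case by simp
next
  case (snoc y xs)
  show ?case
  proof (cases "xs = []")
    case True thus ?thesis by simp
  next
    case False
    have wxs: "walk VS E xs" using walk_butlast snoc.prems(1) False by blast
    have nbxs: "nb xs" using snoc.prems(2) unfolding nb_def
      by (metis (no_types, lifting) length_append_singleton less_SucI nth_append_left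
          add_lessD1 less_Suc_eq)
    have dxs: "distinct xs" using snoc.IH wxs nbxs by blast
    let ?n = "length xs"
    have edge: "{xs ! (?n - 1), y} \<in> E"
    proof -
      have "Suc (?n - 1) < length (xs @ [y])" using False by simp
      then have "{(xs @ [y]) ! (?n - 1), (xs @ [y]) ! Suc (?n - 1)} \<in> E"
        using snoc.prems(1) unfolding walk_def by blast
      moreover have "(xs @ [y]) ! (?n - 1) = xs ! (?n - 1)" using False by (simp add: nth_append)
      moreover have "(xs @ [y]) ! Suc (?n - 1) = y" using False by (simp add: nth_append)
      ultimately show ?thesis by simp
    qed
    have "y \<notin> set xs"
    proof
      assume "y \<in> set xs"
      then obtain i where i: "i < ?n" "xs ! i = y" by (auto simp: in_set_conv_nth)
      consider "i = ?n - 1" | "i + 2 = ?n" | "i + 3 \<le> ?n" using i by linarith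
      then show False
      proof cases
        case 1
        then have "{y} \<in> E" using edge i by simp
        then show False using card2 by fastforce
      next
        case 2
        have "i + 2 < length (xs @ [y])" using 2 by simp
        then have "(xs @ [y]) ! i \<noteq> (xs @ [y]) ! (i + 2)" using snoc.prems(2) unfolding nb_def by blast
        moreover have "(xs @ [y]) ! i = y" using i by (simp add: nth_append)
        moreover have "(xs @ [y]) ! (i + 2) = y" using 2 by (simp add: nth_append)
        ultimately show False by simp
      next
        case 3
        let ?c = "drop i xs"
        have "is_cycle VS E ?c"
          unfolding is_cycle_def
        proof (intro conjI)
          show "walk VS E ?c" using walk_drop[OF wxs i(1)] .
          show "distinct ?c" using dxs by simp
          show "3 \<le> length ?c" using 3 by simp
          have "last ?c = xs ! (?n - 1)" using i by (simp add: last_conv_nth)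
          moreover have "hd ?c = y" using i by (simp add: hd_drop_conv_nth)
          ultimately show "{last ?c, hd ?c} \<in> E" using edge by simp
        qed
        then show False using acyc by blast
      qed
    qed
    then show ?thesis using dxs by simp
  qed
qed



lemma tdist_walk:
  assumes "connected_graph VS E" "a \<in> VS" "r \<in> VS"
  shows "\<exists>P. walk VS E P \<and> hd P = r \<and> last P = a \<and> length P = Suc (tdist VS E r a)"
proof -
  obtain xs where xs: "walk VS E xs" "hd xs = r" "last xs = a"
    using assms unfolding connected_graph_def by blast
  then have "length xs = Suc (length xs - 1)" by (simp add: walk_def)
  then have ex: "\<exists>n xs. walk VS E xs \<and> hd xs = r \<and> last xs = a \<and> length xs = Suc n" using xs by blast
  show ?thesis unfolding tdist_def using LeastI_ex[OF ex] by blast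
qed

lemma tdist_le:
  assumes "walk VS E P" "hd P = r" "last P = a"
  shows "tdist VS E r a \<le> length P - 1"
proof -
  have "length P = Suc (length P - 1)" using assms by (simp add: walk_def)
  then show ?thesis unfolding tdist_def using assms by (intro Least_le) blast
qed

lemma shortest_nth:
  assumes conn: "connected_graph VS E" and rV: "r \<in> VS"
    and P: "walk VS E P" "hd P = r" "last P = a" "length P = Suc (tdist VS E r a)"
    and t: "t < length P"
  shows "tdist VS E r (P ! t) = t"
proof -
  have Pne: "P \<noteq> []" using P by (simp add: walk_def)
  have le: "tdist VS E r (P ! t) \<le> t"
  proof -
    have "walk VS E (take (Suc t) P)" using walk_take[OF P(1)] by simp
    moreover have "hd (take (Suc t) P) = r" using P(2) Pne by simp
    moreover have "last (take (Suc t) P) = P ! t" using t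
      by (simp add: take_Suc_conv_app_nth)
    ultimately have "tdist VS E r (P ! t) \<le> length (take (Suc t) P) - 1" using tdist_le by metis
    then show ?thesis using t by simp
  qed
  have "\<not> tdist VS E r (P ! t) < t"
  proof
    assume lt: "tdist VS E r (P ! t) < t"
    have "P ! t \<in> VS" using P(1) t unfolding walk_def by auto
    then obtain Q where Q: "walk VS E Q" "hd Q = r" "last Q = P ! t"
      "length Q = Suc (tdist VS E r (P ! t))"
      using tdist_walk[OF conn _ rV] by blast
    have wd: "walk VS E (drop t P)" using walk_drop[OF P(1) t] .
    have "last Q = hd (drop t P)" using Q(3) t by (simp add: hd_drop_conv_nth)
    from walk_join[OF Q(1) wd this]
    have J: "walk VS E (Q @ tl (drop t P))" "hd (Q @ tl (drop t P)) = r"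
      "last (Q @ tl (drop t P)) = a"
      "length (Q @ tl (drop t P)) = length Q + length (drop t P) - 1"
      using Q P t Pne by (auto simp: walk_def)
    have "tdist VS E r a \<le> length (Q @ tl (drop t P)) - 1" using tdist_le[OF J(1-3)] .
    also have "\<dots> < tdist VS E r a" using J(4) Q(4) lt P(4) t by simp
    finally show False by simp
  qed
  then show ?thesis using le by simp
qed

lemma edge_le:
  assumes conn: "connected_graph VS E" and rV: "r \<in> VS" and a: "a \<in> VS"
    and e: "{a, b} \<in> E" and b: "b \<in> VS"
  shows "tdist VS E r b \<le> tdist VS E r a + 1"
proof -
  obtain P where P: "walk VS E P" "hd P = r" "last P = a" "length P = Suc (tdist VS E r a)"
    using tdist_walk[OF conn a rV] by blast
  have "walk VS E [b]" using b by (simp add: walk_def)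
  then have "walk VS E (P @ [b])" using walk_app[OF P(1)] e P(3) by simp
  moreover have "hd (P @ [b]) = r" using P by (simp add: walk_def)
  ultimately have "tdist VS E r b \<le> length (P @ [b]) - 1" using tdist_le by fastforce
  then show ?thesis using P(4) by simp
qed

lemma edge_neq:
  assumes tree: "is_tree VS E" and rV: "r \<in> VS" and e: "{a, b} \<in> E"
  shows "tdist VS E r a \<noteq> tdist VS E r b"
proof
  assume eq: "tdist VS E r a = tdist VS E r b"
  have g: "graph VS E" and conn: "connected_graph VS E" and acyc: "\<And>ys. \<not> is_cycle VS E ys"
    using tree unfolding is_tree_def by auto
  have card2: "\<And>e. e \<in> E \<Longrightarrow> card e = 2" using g unfolding graph_def by auto
  have aV: "a \<in> VS" and bV: "b \<in> VS" using g e unfolding graph_def by auto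
  define n where "n = tdist VS E r a"
  obtain P where P: "walk VS E P" "hd P = r" "last P = a" "length P = Suc n"
    using tdist_walk[OF conn aV rV] n_def by blast
  obtain Q where Q: "walk VS E Q" "hd Q = r" "last Q = b" "length Q = Suc n"
    using tdist_walk[OF conn bV rV] n_def eq by auto
  have hP: "\<And>t. t < Suc n \<Longrightarrow> tdist VS E r (P ! t) = t"
    using shortest_nth[OF conn rV P(1-3)] P(4) n_def by simp
  have hQ: "\<And>t. t < Suc n \<Longrightarrow> tdist VS E r (Q ! t) = t"
    using shortest_nth[OF conn rV Q(1-3)] Q(4) n_def eq by simp
  define W where "W = P @ rev Q"
  have lenW: "length W = 2 * n + 2" using P(4) Q(4) W_def by simp
  have Wnth: "\<And>i. i < 2 * n + 2 \<Longrightarrow> tdist VS E r (W ! i) = (if i \<le> n then i else 2 * n + 1 - i)"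
  proof -
    fix i assume i: "i < 2 * n + 2"
    show "tdist VS E r (W ! i) = (if i \<le> n then i else 2 * n + 1 - i)"
    proof (cases "i \<le> n")
      case True
      then show ?thesis using hP P(4) W_def by (simp add: nth_append)
    next
      case False
      then have "W ! i = rev Q ! (i - Suc n)" using P(4) W_def by (simp add: nth_append)
      also have "\<dots> = Q ! (2 * n + 1 - i)" using Q(4) False i by (simp add: rev_nth mult_2)
      finally show ?thesis using hQ False i by simp
    qed
  qed
  have Pne: "P \<noteq> []" and Qne: "Q \<noteq> []" using P Q by (auto simp: walk_def)
  have "{last P, hd (rev Q)} \<in> E" using P(3) Q(3) e Qne by (simp add: hd_rev)
  then have wW: "walk VS E W" using walk_app[OF P(1) walk_rev[OF Q(1)]] W_def by simp
  have nW: "nb W" unfolding nb_def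
  proof (intro allI impI)
    fix i assume i: "i + 2 < length W"
    have ne: "(if i \<le> n then i else 2 * n + 1 - i) \<noteq> (if i + 2 \<le> n then i + 2 else 2 * n + 1 - (i + 2))"
      using i lenW by presburger
    have "tdist VS E r (W ! i) \<noteq> tdist VS E r (W ! (i + 2))"
      using Wnth[of i] Wnth[of "i+2"] i lenW ne by simp
    then show "W ! i \<noteq> W ! (i + 2)" by auto
  qed
  have "distinct W" using nb_distinct[OF acyc card2 wW nW] .
  moreover have "W ! 0 = r" using P(2) Pne W_def by (simp add: hd_conv_nth nth_append)
  moreover have "W ! (2 * n + 1) = r" using Q(2) Qne W_def lenW
    by (metis Suc_1 add_Suc_right diff_Suc_1 last_append last_conv_nth last_rev lessI
        list.size(3) nat.simps(3) rev_is_Nil_conv)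
  ultimately have "(0::nat) = 2 * n + 1" using lenW nth_eq_iff_index_eq[of W 0 "2 * n + 1"] by simp
  then show False by simp
qed

lemma edge_parity:
  assumes tree: "is_tree VS E" and rV: "r \<in> VS" and e: "{a, b} \<in> E"
  shows "odd (tdist VS E r a) \<longleftrightarrow> even (tdist VS E r b)"
proof -
  have g: "graph VS E" and conn: "connected_graph VS E"
    using tree unfolding is_tree_def by auto
  have aV: "a \<in> VS" and bV: "b \<in> VS" using g e unfolding graph_def by auto
  have e': "{b, a} \<in> E" using e by (simp add: insert_commute)
  have "tdist VS E r b \<le> tdist VS E r a + 1" using edge_le[OF conn rV aV e bV] .
  moreover have "tdist VS E r a \<le> tdist VS E r b + 1" using edge_le[OF conn rV bV e' aV] .
  moreover have "tdist VS E r a \<noteq> tdist VS E r b" using edge_neq[OF tree rV e] .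
  ultimately show ?thesis by presburger
qed



lemma nb_snoc:
  assumes "nb xs" "2 \<le> length xs \<Longrightarrow> xs ! (length xs - 2) \<noteq> y"
  shows "nb (xs @ [y])"
  unfolding nb_def
proof (intro allI impI)
  fix i assume i: "i + 2 < length (xs @ [y])"
  show "(xs @ [y]) ! i \<noteq> (xs @ [y]) ! (i + 2)"
  proof (cases "i + 2 < length xs")
    case True
    then show ?thesis using assms(1) unfolding nb_def by (simp add: nth_append)
  next
    case False
    then have ii: "i = length xs - 2" "2 \<le> length xs" using i by auto
    have il: "i < length xs" using ii by simp
    then have "(xs @ [y]) ! i = xs ! i" by (simp add: nth_append)
    then have "(xs @ [y]) ! i = xs ! (length xs - 2)" using ii by simp
    moreover have "(xs @ [y]) ! (i + 2) = y"
    proof -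
      have "i + 2 = length xs" using ii by simp
      then show ?thesis by (metis nth_append_length)
    qed
    ultimately show ?thesis using assms(2) ii(2) by simp
  qed
qed

lemma card2_other:
  assumes "card e = 2" "u \<in> e" shows "\<exists>w. w \<noteq> u \<and> e = {u, w}"
proof -
  obtain x y where xy: "e = {x, y}" "x \<noteq> y" using assms(1) unfolding card_2_iff by blast
  show ?thesis
  proof (cases "u = x")
    case True then show ?thesis using xy by (intro exI[of _ y]) auto
  next
    case False
    then have "u = y" using xy assms(2) by blast
    then show ?thesis using xy by (intro exI[of _ x]) (auto simp: insert_commute)
  qed
qed

lemma two_elems:
  assumes "finite A" "2 \<le> card A" shows "\<exists>a b. a \<in> A \<and> b \<in> A \<and> a \<noteq> b"
proof -
  have "A \<noteq> {}" using assms by auto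
  then obtain a where a: "a \<in> A" by blast
  have "card (A - {a}) \<ge> 1" using assms a by simp
  then have "A - {a} \<noteq> {}" by (intro notI) simp
  then show ?thesis using a by blast
qed

lemma process:
  assumes tree: "is_tree VS E" and rV: "r \<in> VS" and k: "k \<ge> 1"
    and deg: "\<forall>v\<in>odd_vertices VS E r. degree E v = k + 1"
  shows "matching E M \<Longrightarrow> walk VS E xs \<Longrightarrow> nb xs \<Longrightarrow> 2 \<le> length xs \<Longrightarrow> hd xs = v0
    \<Longrightarrow> last xs \<in> odd_vertices VS E r \<Longrightarrow> last xs \<notin> \<Union>M \<Longrightarrow> v0 \<notin> \<Union>M
    \<Longrightarrow> (\<forall>v\<in>K \<union> odd_vertices VS E r. v \<noteq> last xs \<longrightarrow> v \<in> \<Union>M)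
    \<Longrightarrow> \<exists>M'. matching E M' \<and> v0 \<notin> \<Union>M' \<and> (\<forall>v\<in>K \<union> odd_vertices VS E r. v \<in> \<Union>M')"
proof (induction "card VS - length xs" arbitrary: M xs rule: less_induct)
  case less
  note IH = less.hyps
  have g: "graph VS E" and conn: "connected_graph VS E" and acyc: "\<And>ys. \<not> is_cycle VS E ys"
    using tree unfolding is_tree_def by auto
  have card2: "\<And>e. e \<in> E \<Longrightarrow> card e = 2" using g unfolding graph_def by auto
  have finV: "finite VS" using g unfolding graph_def by auto
  have EV: "\<And>e. e \<in> E \<Longrightarrow> e \<subseteq> VS" using g unfolding graph_def by auto
  have finE: "finite E" using finV EV by (meson Pow_iff finite_Pow_iff finite_subset subsetI)
  define U where "U = odd_vertices VS E r"
  define u where "u = last xs"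
  define n where "n = length xs"
  define p where "p = xs ! (n - 2)"
  have xne: "xs \<noteq> []" using less.prems(4) by auto
  have uU: "u \<in> U" using less.prems(6) u_def U_def by simp
  have uV: "u \<in> VS" and uodd: "odd (tdist VS E r u)" using uU unfolding U_def odd_vertices_def vheight_def by auto
  have "degree E u = k + 1" using deg uU U_def by simp
  then have "2 \<le> card {e\<in>E. u \<in> e}" using k unfolding degree_def by simp
  then obtain e1 e2 where e12: "e1 \<in> E" "u \<in> e1" "e2 \<in> E" "u \<in> e2" "e1 \<noteq> e2"
    using two_elems[of "{e\<in>E. u \<in> e}"] finE by auto
  obtain w1 where w1: "w1 \<noteq> u" "e1 = {u, w1}" using card2_other card2 e12 by metis
  obtain w2 where w2: "w2 \<noteq> u" "e2 = {u, w2}" using card2_other card2 e12 by metis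
  obtain w where w: "{u, w} \<in> E" "w \<noteq> p" using w1 w2 e12 by metis
  have wV: "w \<in> VS" using EV w(1) by auto
  have weven: "even (tdist VS E r w)" using edge_parity[OF tree rV w(1)] uodd by simp
  have wx: "walk VS E (xs @ [w])"
    using walk_app[OF less.prems(2), of "[w]"] wV w(1) u_def by (simp add: walk_def)
  have nx: "nb (xs @ [w])" using nb_snoc[OF less.prems(3)] w(2) p_def n_def by metis
  have dx: "distinct (xs @ [w])" using nb_distinct[OF acyc card2 wx nx] .
  have v0x: "v0 \<in> set xs" using less.prems(5) xne by auto
  have wv0: "w \<noteq> v0" using dx v0x by auto
  have uv0: "u \<noteq> v0"
  proof -
    have "distinct xs" using dx by simp
    moreover have "xs ! 0 = v0" using less.prems(5) xne by (simp add: hd_conv_nth)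
    moreover have "xs ! (n - 1) = u" using u_def n_def xne by (simp add: last_conv_nth)
    moreover have "0 < n" "n - 1 < n" "n - 1 \<noteq> 0" using less.prems(4) n_def by auto
    ultimately show ?thesis using nth_eq_iff_index_eq[of xs 0 "n - 1"] n_def by metis
  qed
  have mE: "M \<subseteq> E" and mdisj: "\<And>e f. e \<in> M \<Longrightarrow> f \<in> M \<Longrightarrow> e \<noteq> f \<Longrightarrow> e \<inter> f = {}"
    using less.prems(1) unfolding matching_def by auto
  have unM: "u \<notin> \<Union>M" using less.prems(7) u_def by simp
  show ?case
  proof (cases "w \<in> \<Union>M")
    case False
    define M' where "M' = insert {u, w} M"
    have "matching E M'" unfolding matching_def M'_def
      using mE w(1) mdisj False unM by auto
    moreover have "v0 \<notin> \<Union>M'" using less.prems(8) wv0 uv0 M'_def by auto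
    moreover have "\<forall>v\<in>K \<union> U. v \<in> \<Union>M'" using less.prems(9) U_def u_def M'_def by auto
    ultimately show ?thesis using U_def by blast
  next
    case True
    then obtain e where e: "e \<in> M" "w \<in> e" by auto
    have eE0: "e \<in> E" using e(1) mE by blast
    obtain u' where u': "u' \<noteq> w" "e = {w, u'}" using card2_other[OF card2[OF eE0] e(2)] by blast
    have uu': "u' \<noteq> u" using unM e u' by auto
    have eE: "{w, u'} \<in> E" using e u' mE by auto
    have u'V: "u' \<in> VS" using EV eE by auto
    have u'odd: "odd (tdist VS E r u')" using edge_parity[OF tree rV eE] weven by simp
    have u'U: "u' \<in> U" using u'V u'odd unfolding U_def odd_vertices_def vheight_def by simp
    define M' where "M' = insert {u, w} (M - {e})"
    define xs' where "xs' = (xs @ [w]) @ [u']"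
    have mM': "matching E M'" unfolding matching_def
    proof (intro conjI ballI impI)
      show "M' \<subseteq> E" using mE w(1) M'_def by auto
      fix f g assume f: "f \<in> M'" and gg: "g \<in> M'" and fg: "f \<noteq> g"
      have aux: "\<And>f. f \<in> M - {e} \<Longrightarrow> f \<inter> {u, w} = {}"
      proof -
        fix f assume f: "f \<in> M - {e}"
        have "u \<notin> f" using unM f by auto
        moreover have "w \<notin> f" using mdisj[of f e] f e by auto
        ultimately show "f \<inter> {u, w} = {}" by auto
      qed
      show "f \<inter> g = {}"
      proof (cases "f = {u, w}")
        case True
        then have "g \<in> M - {e}" using gg fg M'_def by auto
        then show ?thesis using aux True by blast
      next
        case False
        then have f1: "f \<in> M - {e}" using f M'_def by auto
        show ?thesis
        proof (cases "g = {u, w}")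
          case True then show ?thesis using aux[OF f1] by blast
        next
          case False
          then have "g \<in> M - {e}" using gg M'_def by auto
          then show ?thesis using mdisj f1 fg by blast
        qed
      qed
    qed
    have wx': "walk VS E xs'"
      using walk_app[OF wx, of "[u']"] u'V eE xs'_def by (simp add: walk_def)
    have "(xs @ [w]) ! (length (xs @ [w]) - 2) = u"
      using xne u_def by (simp add: nth_append last_conv_nth)
    then have nx': "nb xs'" using nb_snoc[OF nx, of u'] uu' xs'_def by auto
    have dx': "distinct xs'" using nb_distinct[OF acyc card2 wx' nx'] .
    have "set xs' \<subseteq> VS" using wx' unfolding walk_def by simp
    then have "length xs' \<le> card VS" using distinct_card[OF dx'] card_mono[OF finV] by metis
    then have lt: "card VS - length xs' < card VS - length xs" using xs'_def by simp
    have l2: "2 \<le> length xs'" using xs'_def by simp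
    have h': "hd xs' = v0" using less.prems(5) xne xs'_def by simp
    have last': "last xs' = u'" using xs'_def by simp
    have u'nM': "u' \<notin> \<Union>M'"
    proof
      assume "u' \<in> \<Union>M'"
      then obtain f where f: "f \<in> M'" "u' \<in> f" by auto
      show False
      proof (cases "f = {u, w}")
        case True then show False using f uu' u' by auto
      next
        case False
        then have "f \<in> M" "f \<noteq> e" using f M'_def by auto
        then show False using mdisj[of f e] e u' f by auto
      qed
    qed
    have v0nM': "v0 \<notin> \<Union>M'" using less.prems(8) wv0 uv0 M'_def by auto
    have cov: "\<forall>v\<in>K \<union> odd_vertices VS E r. v \<noteq> last xs' \<longrightarrow> v \<in> \<Union>M'"
    proof (intro ballI impI)
      fix v assume v: "v \<in> K \<union> odd_vertices VS E r" "v \<noteq> last xs'"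
      show "v \<in> \<Union>M'"
      proof (cases "v = u \<or> v = w")
        case True then show ?thesis using M'_def by auto
      next
        case False
        then have "v \<noteq> last xs" using u_def by auto
        then have "v \<in> \<Union>M" using less.prems(9) v by auto
        then obtain f where f: "f \<in> M" "v \<in> f" by auto
        have "f \<noteq> e" using f u' False v(2) last' by auto
        then show ?thesis using f M'_def by auto
      qed
    qed
    show ?thesis
      using IH[OF lt mM' wx' nx' l2 h'] last' u'U U_def u'nM' v0nM' cov by auto
  qed
qed



theorem claim2p10:
  fixes k :: nat and VS :: "'a set" and E :: "'a set set" and r :: 'a
    and K :: "'a set" and v0 :: 'a
  assumes "k \<ge> 1"
    and "valid k VS E r"
    and "K \<subseteq> even_vertices VS E r"
    and "mcount VS E r K > 0"
    and "v0 \<in> even_vertices VS E r - K"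
  shows "mcount VS E r (insert v0 K) < mcount VS E r K"
proof -
  have tree: "is_tree VS E" and rV: "r \<in> VS"
    and deg: "\<forall>v\<in>odd_vertices VS E r. degree E v = k + 1"
    using assms(2) unfolding valid_def rooted_tree_def by auto
  have g: "graph VS E" using tree unfolding is_tree_def by auto
  have card2: "\<And>e. e \<in> E \<Longrightarrow> card e = 2" using g unfolding graph_def by auto
  have finV: "finite VS" using g unfolding graph_def by auto
  have EV: "\<And>e. e \<in> E \<Longrightarrow> e \<subseteq> VS" using g unfolding graph_def by auto
  have finE: "finite E" using finV EV by (meson Pow_iff finite_Pow_iff finite_subset subsetI)
  define U where "U = odd_vertices VS E r"
  define S where "S = {M. matching E M \<and> (\<forall>v \<in> K \<union> U. v \<in> \<Union>M)}"
  define S' where "S' = {M. matching E M \<and> (\<forall>v \<in> insert v0 K \<union> U. v \<in> \<Union>M)}"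
  have mS: "mcount VS E r K = card S" unfolding mcount_def S_def U_def by simp
  have mS': "mcount VS E r (insert v0 K) = card S'" unfolding mcount_def S'_def U_def by simp
  have finS: "finite S"
  proof -
    have "S \<subseteq> Pow E" unfolding S_def matching_def by auto
    then show ?thesis using finE finite_subset by blast
  qed
  have "S \<noteq> {}" using assms(4) mS by (metis card.empty less_irrefl)
  then obtain M0 where M0: "matching E M0" "\<forall>v \<in> K \<union> U. v \<in> \<Union>M0" unfolding S_def by blast
  have v0V: "v0 \<in> VS" and v0ev: "even (tdist VS E r v0)" and v0K: "v0 \<notin> K"
    using assms(5) unfolding even_vertices_def vheight_def by auto
  have v0U: "v0 \<notin> U" using v0ev unfolding U_def odd_vertices_def vheight_def by auto
  have "\<exists>M'. matching E M' \<and> v0 \<notin> \<Union>M' \<and> (\<forall>v\<in>K \<union> U. v \<in> \<Union>M')"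
  proof (cases "v0 \<in> \<Union>M0")
    case False then show ?thesis using M0 by blast
  next
    case True
    then obtain e where e: "e \<in> M0" "v0 \<in> e" by auto
    have mE: "M0 \<subseteq> E" and mdisj: "\<And>e f. e \<in> M0 \<Longrightarrow> f \<in> M0 \<Longrightarrow> e \<noteq> f \<Longrightarrow> e \<inter> f = {}"
      using M0(1) unfolding matching_def by auto
    have eE: "e \<in> E" using e mE by blast
    obtain u1 where u1: "u1 \<noteq> v0" "e = {v0, u1}" using card2_other[OF card2[OF eE] e(2)] by blast
    have eE': "{v0, u1} \<in> E" using eE u1 by simp
    have u1V: "u1 \<in> VS" using EV eE' by auto
    have u1odd: "odd (tdist VS E r u1)" using edge_parity[OF tree rV eE'] v0ev by simp
    have u1U: "u1 \<in> odd_vertices VS E r" using u1V u1odd unfolding odd_vertices_def vheight_def by simp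
    define M1 where "M1 = M0 - {e}"
    have m1: "matching E M1" using M0(1) unfolding matching_def M1_def by auto
    have w: "walk VS E [v0, u1]" using v0V u1V eE' unfolding walk_def by (auto simp: less_Suc_eq)
    have nb: "nb [v0, u1]" unfolding nb_def by simp
    have nin: "\<And>x. x \<in> e \<Longrightarrow> x \<notin> \<Union>M1"
    proof
      fix x assume x: "x \<in> e" "x \<in> \<Union>M1"
      then obtain f where "f \<in> M0" "f \<noteq> e" "x \<in> f" unfolding M1_def by auto
      then show False using mdisj[of f e] e x by auto
    qed
    have u1n: "u1 \<notin> \<Union>M1" using nin u1 by simp
    have v0n: "v0 \<notin> \<Union>M1" using nin e by simp
    have cov: "\<forall>v\<in>K \<union> odd_vertices VS E r. v \<noteq> last [v0, u1] \<longrightarrow> v \<in> \<Union>M1"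
    proof (intro ballI impI)
      fix v assume v: "v \<in> K \<union> odd_vertices VS E r" "v \<noteq> last [v0, u1]"
      then have "v \<in> \<Union>M0" using M0(2) U_def by auto
      then obtain f where f: "f \<in> M0" "v \<in> f" by auto
      have "v \<noteq> v0" using v v0K v0U U_def by auto
      then have "f \<noteq> e" using f v u1 by auto
      then show "v \<in> \<Union>M1" using f M1_def by auto
    qed
    have l2: "2 \<le> length [v0, u1]" by simp
    have hd: "hd [v0, u1] = v0" by simp
    have lU: "last [v0, u1] \<in> odd_vertices VS E r" using u1U by simp
    have ln: "last [v0, u1] \<notin> \<Union>M1" using u1n by simp
    show ?thesis
      using process[OF tree rV assms(1) deg m1 w nb l2 hd lU ln v0n cov] U_def by simp
  qed
  then obtain M' where M': "matching E M'" "v0 \<notin> \<Union>M'" "\<forall>v\<in>K \<union> U. v \<in> \<Union>M'" by blast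
  have "S' \<subseteq> S" unfolding S_def S'_def by auto
  moreover have "M' \<in> S" "M' \<notin> S'" using M' unfolding S_def S'_def by auto
  ultimately have "S' \<subset> S" by blast
  then have "card S' < card S" using finS psubset_card_mono by blast
  then show ?thesis using mS mS' by simp
qed


end
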